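(* For any boolean permutation $v\in\mathfrak{S}_n$, we have $\lambda_2(v)=\textsf{run}(v)$.
   Context: Permutations are composed right to left; $\sigma_i=(i,i+1)$, and a reduced word of a permutation is the sequence of subscripts in a reduced (minimal length) expression as a product of the $\sigma_i$. A permutation is boolean if its reduced words contain no repeated letters (equivalently its principal Bruhat order ideal is a boolean lattice). A run is a sequence of consecutive integers that is either increasing or decreasing, e.g. $a(a+1)\cdots(a+b)$ or $(a+b)\cdots(a+1)a$ with $b\ge0$. For boolean $v$, $\textsf{run}(v)$ is the fewest number of runs whose concatenation is a reduced word for $v$. Under the Robinson–Schensted correspondence (Schensted insertion), $v$ corresponds to a pair of standard Young tableaux of a common shape $\lambda(v)$; $\lambda_i(v)$ denotes the length of the $i$-th row of this shape (zero if there is no such row). *)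

theory Defs
  imports "HOL-Combinatorics.Combinatorics"
begin

text \<open>Permutations of {1..n}; simple transposition sigma_i = (i, i+1).
  A word [a1,...,ak] denotes sigma_a1 o ... o sigma_ak (composition right to left).\<close>

definition simple_transp :: "nat \<Rightarrow> nat \<Rightarrow> nat" where
  "simple_transp i = Transposition.transpose i (Suc i)"

definition word_perm :: "nat list \<Rightarrow> nat \<Rightarrow> nat" where
  "word_perm w = foldr (\<lambda>i f. simple_transp i \<circ> f) w id"

definition is_word :: "nat \<Rightarrow> (nat \<Rightarrow> nat) \<Rightarrow> nat list \<Rightarrow> bool" where
  "is_word n v w \<longleftrightarrow> set w \<subseteq> {1..<n} \<and> word_perm w = v"

definition perm_length :: "nat \<Rightarrow> (nat \<Rightarrow> nat) \<Rightarrow> nat" where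
  "perm_length n v = (LEAST k. \<exists>w. is_word n v w \<and> length w = k)"

definition reduced_word :: "nat \<Rightarrow> (nat \<Rightarrow> nat) \<Rightarrow> nat list \<Rightarrow> bool" where
  "reduced_word n v w \<longleftrightarrow> is_word n v w \<and> length w = perm_length n v"

definition boolean_perm :: "nat \<Rightarrow> (nat \<Rightarrow> nat) \<Rightarrow> bool" where
  "boolean_perm n v \<longleftrightarrow> (\<forall>w. reduced_word n v w \<longrightarrow> distinct w)"

definition is_run :: "nat list \<Rightarrow> bool" where
  "is_run r \<longleftrightarrow> (\<exists>a b. r = [a..<a+b+1] \<or> r = rev [a..<a+b+1])"

definition run_num :: "nat \<Rightarrow> (nat \<Rightarrow> nat) \<Rightarrow> nat" where
  "run_num n v = (LEAST k. \<exists>rs. length rs = k \<and> (\<forall>r\<in>set rs. is_run r)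
                              \<and> reduced_word n v (concat rs))"

fun bump :: "nat list \<Rightarrow> nat \<Rightarrow> nat list \<times> nat option" where
  "bump [] x = ([x], None)"
| "bump (y # ys) x = (if x < y then (x # ys, Some y)
                      else (let (ys', z) = bump ys x in (y # ys', z)))"

fun rs_insert :: "nat list list \<Rightarrow> nat \<Rightarrow> nat list list" where
  "rs_insert [] x = [[x]]"
| "rs_insert (r # rs) x = (case bump r x of
        (r', None) \<Rightarrow> r' # rs
      | (r', Some y) \<Rightarrow> r' # rs_insert rs y)"

definition P_tableau :: "nat \<Rightarrow> (nat \<Rightarrow> nat) \<Rightarrow> nat list list" where
  "P_tableau n v = foldl rs_insert [] (map v [1..<Suc n])"

definition rs_shape :: "nat \<Rightarrow> (nat \<Rightarrow> nat) \<Rightarrow> nat list" where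
  "rs_shape n v = map length (P_tableau n v)"

definition lambda_row :: "nat \<Rightarrow> (nat \<Rightarrow> nat) \<Rightarrow> nat \<Rightarrow> nat" where
  "lambda_row n v i = (if 1 \<le> i \<and> i \<le> length (rs_shape n v) then rs_shape n v ! (i - 1) else 0)"

end

theory Submission
  imports Defs "HOL-Library.Multiset"
begin

lemma wp_nil[simp]: "word_perm [] = id" by (simp add: word_perm_def)
lemma wp_cons[simp]: "word_perm (i # w) = simple_transp i \<circ> word_perm w"
  by (simp add: word_perm_def)
lemma wp_append: "word_perm (xs @ ys) = word_perm xs \<circ> word_perm ys"
  by (induction xs) (auto simp: o_assoc)

lemma st_comm: "Suc (Suc j) \<le> k \<Longrightarrow> simple_transp j \<circ> simple_transp k = simple_transp k \<circ> simple_transp j"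
  by (rule ext) (auto simp: simple_transp_def transpose_def)

lemma wp_comm: "\<forall>j\<in>set ys. Suc (Suc j) \<le> k \<Longrightarrow> word_perm ys \<circ> simple_transp k = simple_transp k \<circ> word_perm ys"
proof (induction ys)
  case Nil then show ?case by simp
next
  case (Cons a ys)
  have "word_perm (a # ys) \<circ> simple_transp k = simple_transp a \<circ> (word_perm ys \<circ> simple_transp k)" by (simp add: o_assoc)
  also have "\<dots> = (simple_transp a \<circ> simple_transp k) \<circ> word_perm ys" using Cons by (simp add: fun_eq_iff)
  also have "\<dots> = simple_transp k \<circ> word_perm (a # ys)" using Cons st_comm[of a k] by (simp add: o_assoc)
  finally show ?case .
qed

lemma wp_permutes: "set x \<subseteq> {1..<k} \<Longrightarrow> word_perm x permutes {1..k}"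
proof (induction x)
  case Nil then show ?case by (auto simp: permutes_def)
next
  case (Cons a x)
  have "simple_transp a permutes {1..k}" using Cons.prems unfolding simple_transp_def
    by (intro permutes_swap_id) auto
  moreover have "word_perm x permutes {1..k}" using Cons by simp
  ultimately show ?case unfolding wp_cons by (rule permutes_compose[rotated])
qed

definition up :: "nat list \<Rightarrow> nat \<Rightarrow> bool" where
  "up x k \<longleftrightarrow> (\<exists>xs ys. x = xs @ k # ys \<and> k - 1 \<in> set xs)"

lemma up_split: assumes "distinct (xs @ k # ys)" shows "up (xs @ k # ys) k \<longleftrightarrow> k - 1 \<in> set xs"
proof
  assume "up (xs @ k # ys) k"
  then obtain as bs where e: "xs @ k # ys = as @ k # bs" and "k - 1 \<in> set as" by (auto simp: up_def)
  have "distinct (as @ k # bs)" using e assms by simp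
  then have "k \<notin> set as" by simp
  have "k \<notin> set xs" "k \<notin> set ys" using assms by auto
  from append_Cons_eq_iff[OF this, of as bs] have "as = xs" using e by simp
  then show "k - 1 \<in> set xs" using \<open>k - 1 \<in> set as\<close> by simp
qed (auto simp: up_def)

lemma up_in: "up x k \<Longrightarrow> k \<in> set x \<and> k - 1 \<in> set x"
  by (auto simp: up_def)

lemma up_filter: assumes "distinct x" "P k" "P (k - 1)"
  shows "up (filter P x) k \<longleftrightarrow> up x k"
proof (cases "k \<in> set x")
  case True
  then obtain xs ys where x: "x = xs @ k # ys" by (meson split_list)
  have "filter P x = filter P xs @ k # filter P ys" using x assms by simp
  moreover have "distinct (filter P x)" using assms by simp
  ultimately have "up (filter P x) k \<longleftrightarrow> k - 1 \<in> set (filter P xs)"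
    using up_split by simp
  also have "\<dots> \<longleftrightarrow> k - 1 \<in> set xs" using assms by simp
  also have "\<dots> \<longleftrightarrow> up x k" using up_split assms x by simp
  finally show ?thesis .
next
  case False
  then show ?thesis using up_in by fastforce
qed

lemma Lprime: assumes "distinct x" "k \<in> set x" "\<forall>j\<in>set x. j \<le> k"
  shows "word_perm x = (if up x k then word_perm (filter (\<lambda>j. j \<noteq> k) x) \<circ> simple_transp k
                         else simple_transp k \<circ> word_perm (filter (\<lambda>j. j \<noteq> k) x))"
proof -
  obtain xs ys where x: "x = xs @ k # ys" using assms by (meson split_list)
  have f: "filter (\<lambda>j. j \<noteq> k) x = xs @ ys" proof -
    have "k \<notin> set xs" "k \<notin> set ys" using x assms by auto
    then have "filter (\<lambda>j. j \<noteq> k) xs = xs" "filter (\<lambda>j. j \<noteq> k) ys = ys"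
      by (auto simp: filter_id_conv)
    then show ?thesis using x by simp
  qed
  show ?thesis
  proof (cases "k - 1 \<in> set xs")
    case True
    have "\<forall>j\<in>set ys. Suc (Suc j) \<le> k"
    proof
      fix j assume j: "j \<in> set ys"
      have "j \<noteq> k" "j \<noteq> k - 1" "j \<le> k" using assms x True j by auto
      then show "Suc (Suc j) \<le> k" by linarith
    qed
    then have "word_perm x = word_perm xs \<circ> (simple_transp k \<circ> word_perm ys)"
      by (simp add: x wp_append)
    also have "\<dots> = word_perm (xs @ ys) \<circ> simple_transp k"
      using wp_comm[OF \<open>\<forall>j\<in>set ys. Suc (Suc j) \<le> k\<close>] by (simp add: wp_append fun_eq_iff)
    finally show ?thesis using up_split assms x True f by simp
  next
    case False
    have "\<forall>j\<in>set xs. Suc (Suc j) \<le> k"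
    proof
      fix j assume j: "j \<in> set xs"
      have "j \<noteq> k" "j \<noteq> k - 1" "j \<le> k" using assms x False j by auto
      then show "Suc (Suc j) \<le> k" by linarith
    qed
    then have "word_perm x = (word_perm xs \<circ> simple_transp k) \<circ> word_perm ys"
      by (simp add: x wp_append o_assoc)
    also have "\<dots> = simple_transp k \<circ> word_perm (xs @ ys)"
      using wp_comm[OF \<open>\<forall>j\<in>set xs. Suc (Suc j) \<le> k\<close>] by (simp add: wp_append fun_eq_iff)
    finally show ?thesis using up_split assms x False f by simp
  qed
qed

lemma Qstep: assumes "distinct x"
  shows "word_perm (filter (\<lambda>j. j < Suc k) x) =
     (if k \<notin> set x then word_perm (filter (\<lambda>j. j < k) x)
      else if up x k then word_perm (filter (\<lambda>j. j < k) x) \<circ> simple_transp k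
      else simple_transp k \<circ> word_perm (filter (\<lambda>j. j < k) x))"
proof (cases "k \<in> set x")
  case False
  then have "filter (\<lambda>j. j < Suc k) x = filter (\<lambda>j. j < k) x"
    by (intro filter_cong) (auto simp: less_Suc_eq)
  then show ?thesis using False by simp
next
  case True
  let ?y = "filter (\<lambda>j. j < Suc k) x"
  have ff: "filter (\<lambda>j. j \<noteq> k) ?y = filter (\<lambda>j. j < k) x" by (auto simp: filter_filter less_Suc_eq intro: filter_cong)
  have "up ?y k = up x k" using up_filter[OF assms, of "\<lambda>j. j < Suc k" k] by simp
  have "distinct ?y" "k \<in> set ?y" "\<forall>j\<in>set ?y. j \<le> k" using True assms by auto
  from Lprime[OF this] show ?thesis using True \<open>up ?y k = up x k\<close> ff by simp
qed

lemma wp_eq: assumes "distinct x" "distinct y" "set x = set y" "\<And>j. up x j = up y j"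
  shows "word_perm (filter (\<lambda>j. j < K) x) = word_perm (filter (\<lambda>j. j < K) y)"
proof (induction K)
  case 0 then show ?case by simp
next
  case (Suc K)
  show ?case unfolding Qstep[OF assms(1), of K] Qstep[OF assms(2), of K] using assms(3,4) Suc by simp
qed

definition Ptab :: "nat list \<Rightarrow> nat list list" where
  "Ptab xs = foldl rs_insert [] xs"
definition row1 :: "nat list list \<Rightarrow> nat list" where
  "row1 T = (case T of [] \<Rightarrow> [] | r # _ \<Rightarrow> r)"
definition l2 :: "nat list list \<Rightarrow> nat" where
  "l2 T = length (row1 (tl T))"
definition alpha :: "nat list \<Rightarrow> bool" where
  "alpha u \<longleftrightarrow> (\<forall>z\<in>set (row1 (Ptab (butlast u))). z < last u)"
definition beta :: "nat \<Rightarrow> nat list \<Rightarrow> bool" where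
  "beta m u \<longleftrightarrow> m \<in> set (row1 (Ptab u))"

lemma row1_cons[simp]: "row1 (r # T) = r" by (simp add: row1_def)
lemma row1_nil[simp]: "row1 [] = []" by (simp add: row1_def)

lemma Ptab_snoc: "Ptab (xs @ [x]) = rs_insert (Ptab xs) x" by (simp add: Ptab_def)
lemma Ptab_nil[simp]: "Ptab [] = []" by (simp add: Ptab_def)

lemma bump_mset: "bump r x = (r', z) \<Longrightarrow>
   mset r' + (case z of None \<Rightarrow> {#} | Some y \<Rightarrow> {#y#}) = add_mset x (mset r)"
proof (induction r x arbitrary: r' z rule: bump.induct)
  case (1 x) then show ?case by auto
next
  case (2 y ys x)
  show ?case
  proof (cases "x < y")
    case True then show ?thesis using 2 by auto
  next
    case False
    obtain ys' z' where b: "bump ys x = (ys', z')" by fastforce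
    then have "r' = y # ys'" "z = z'" using 2 False by auto
    then show ?thesis using 2(1)[OF False b] by simp
  qed
qed

lemma ins_mset: "mset (concat (rs_insert T x)) = add_mset x (mset (concat T))"
proof (induction T x rule: rs_insert.induct)
  case (1 x) then show ?case by simp
next
  case (2 r rs x)
  obtain r' z where b: "bump r x = (r', z)" by fastforce
  show ?case
  proof (cases z)
    case None then show ?thesis using b bump_mset[OF b] by simp
  next
    case (Some y) then show ?thesis using b bump_mset[OF b] 2[OF b[symmetric] Some] by simp
  qed
qed

lemma Ptab_mset: "mset (concat (Ptab xs)) = mset xs"
  by (induction xs rule: rev_induct) (auto simp: Ptab_snoc ins_mset)

lemma Ptab_set: "set (concat (Ptab xs)) = set xs"
proof -
  have "set_mset (mset (concat (Ptab xs))) = set_mset (mset xs)" by (simp only: Ptab_mset)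
  then show ?thesis by simp
qed

lemma Ptab_distinct: "distinct xs \<Longrightarrow> distinct (concat (Ptab xs))"
  using mset_eq_imp_distinct_iff[OF Ptab_mset[of xs]] by simp

lemma row1_sub: "set (row1 T) \<subseteq> set (concat T)"
  by (cases T) auto

lemma row1_tl_sub: "set (row1 (tl T)) \<subseteq> set (concat T)"
  by (cases T) (auto simp: row1_def split: list.splits)

lemma bump_max: "\<forall>z\<in>set r. \<not> M < z \<Longrightarrow> bump r M = (r @ [M], None)"
  by (induction r) auto

lemma ins_max: "\<forall>z\<in>set (concat T). z < M \<Longrightarrow> rs_insert T M = (row1 T @ [M]) # tl T"
  by (cases T) (auto simp: bump_max less_imp_not_less)

lemma bump_app_some: "bump r y = (r', Some z) \<Longrightarrow> bump (r @ s) y = (r' @ s, Some z)"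
proof (induction r y arbitrary: r' rule: bump.induct)
  case (1 x) then show ?case by simp
next
  case (2 a ys x)
  show ?case
  proof (cases "x < a")
    case True then show ?thesis using 2 by auto
  next
    case False
    obtain ys' z' where b: "bump ys x = (ys', z')" by fastforce
    then show ?thesis using 2 False by auto
  qed
qed

lemma bump_app_none: "\<forall>z\<in>set r. \<not> y < z \<Longrightarrow> y < b \<Longrightarrow> bump (r @ b # c) y = (r @ y # c, Some b)"
  by (induction r) auto

lemma bump_some_ex: "\<exists>z\<in>set r. y < z \<Longrightarrow> \<exists>r' z. bump r y = (r', Some z)"
proof (induction r)
  case Nil then show ?case by simp
next
  case (Cons a r)
  show ?case
  proof (cases "y < a")
    case True then show ?thesis by simp
  next
    case False
    then obtain r' z where "bump r y = (r', Some z)" using Cons by auto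
    then show ?thesis using False by auto
  qed
qed

lemma bump_mono: "strict_mono f \<Longrightarrow>
   bump (map f r) (f x) = (map f (fst (bump r x)), map_option f (snd (bump r x)))"
proof (induction r)
  case Nil then show ?case by simp
next
  case (Cons a r)
  have lt: "f x < f a \<longleftrightarrow> x < a" using Cons.prems by (simp add: strict_mono_less)
  obtain r' z where b: "bump r x = (r', z)" by fastforce
  have ih: "bump (map f r) (f x) = (map f r', map_option f z)" using Cons b by simp
  show ?case
  proof (cases "x < a")
    case True then show ?thesis using lt by simp
  next
    case False then show ?thesis using lt b ih by simp
  qed
qed

lemma ins_mono: "strict_mono f \<Longrightarrow> rs_insert (map (map f) T) (f x) = map (map f) (rs_insert T x)"
proof (induction T x rule: rs_insert.induct)
  case (1 x) then show ?case by simp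
next
  case (2 r rs x)
  obtain r' z where b: "bump r x = (r', z)" by fastforce
  have bm: "bump (map f r) (f x) = (map f r', map_option f z)" using bump_mono[OF 2(2)] b by simp
  show ?case
  proof (cases z)
    case None then show ?thesis using b bm by simp
  next
    case (Some y) then show ?thesis using b bm 2(1)[OF b[symmetric] Some 2(2)] by simp
  qed
qed

lemma Ptab_mono: "strict_mono f \<Longrightarrow> Ptab (map f xs) = map (map f) (Ptab xs)"
  by (induction xs rule: rev_induct) (auto simp: Ptab_snoc ins_mono)

lemma Ptab_ne: "xs \<noteq> [] \<Longrightarrow> Ptab xs \<noteq> []"
proof (induction xs rule: rev_induct)
  case (snoc x xs)
  show ?case unfolding Ptab_snoc by (cases "Ptab xs") (auto split: prod.splits option.splits)
qed simp

lemma trans0: assumes "\<forall>z\<in>set u. z < M"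
  shows "l2 (Ptab (u @ [M])) = l2 (Ptab u)" "alpha (u @ [M])" "beta M (u @ [M])"
proof -
  have e: "Ptab (u @ [M]) = (row1 (Ptab u) @ [M]) # tl (Ptab u)"
    unfolding Ptab_snoc using assms Ptab_set by (intro ins_max) auto
  show "l2 (Ptab (u @ [M])) = l2 (Ptab u)" using e by (cases "Ptab u") (auto simp: l2_def)
  show "alpha (u @ [M])" using assms row1_sub[of "Ptab u"] Ptab_set[of u] by (auto simp: alpha_def)
  show "beta M (u @ [M])" using e by (simp add: beta_def)
qed

lemma l2_cons: "l2 (r # T) = length (row1 T)" by (simp add: l2_def)

lemma transA: assumes d: "distinct u" and ne: "u \<noteq> []" and M: "\<forall>z\<in>set u. z < M"
  shows "l2 (Ptab (butlast u @ [M, last u])) = l2 (Ptab u) + (if alpha u then 1 else 0)"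
    "\<not> alpha (butlast u @ [M, last u])"
    "beta M (butlast u @ [M, last u]) = (\<not> alpha u)"
proof -
  define ys where "ys = butlast u"
  define y where "y = last u"
  have u: "u = ys @ [y]" using ne by (simp add: ys_def y_def)
  define T where "T = Ptab ys"
  have yM: "y < M" using M u by simp
  have yns: "y \<notin> set ys" using d u by simp
  have entT: "set (concat T) = set ys" unfolding T_def by (rule Ptab_set)
  have entM: "\<forall>z\<in>set (concat T). z < M" using entT M u by auto
  have e1: "Ptab (ys @ [M]) = (row1 T @ [M]) # tl T"
    unfolding Ptab_snoc T_def[symmetric] using entM by (rule ins_max)
  have ev: "Ptab (ys @ [M, y]) = rs_insert ((row1 T @ [M]) # tl T) y"
    using e1 Ptab_snoc[of "ys @ [M]" y] by simp
  have eu: "Ptab u = rs_insert T y" using u Ptab_snoc T_def by simp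
  have bv: "butlast (ys @ [M, y]) = ys @ [M]" by (simp add: butlast_append)
  show "\<not> alpha (butlast u @ [M, last u])"
    using yM unfolding ys_def[symmetric] y_def[symmetric] alpha_def bv e1 by simp
  have MnT: "M \<notin> set (row1 T)" using entM row1_sub[of T] by auto
  have "(l2 (Ptab (ys @ [M, y])) = l2 (Ptab u) + (if alpha u then 1 else 0)) \<and>
        (beta M (ys @ [M, y]) = (\<not> alpha u))"
  proof (cases "alpha u")
    case True
    then have a: "\<forall>z\<in>set (row1 T). z < y" using u by (simp add: alpha_def T_def)
    have b1: "bump (row1 T @ [M]) y = (row1 T @ [y], Some M)"
      using bump_app_none[of "row1 T" y M "[]"] a yM by (simp add: less_imp_not_less)
    have "\<forall>z\<in>set (concat (tl T)). z < M" using entM by (cases T) auto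
    then have "rs_insert (tl T) M = (row1 (tl T) @ [M]) # tl (tl T)" by (rule ins_max)
    then have pv: "Ptab (ys @ [M, y]) = (row1 T @ [y]) # (row1 (tl T) @ [M]) # tl (tl T)"
      using ev b1 by simp
    have pu: "l2 (Ptab u) = length (row1 (tl T))"
    proof (cases T)
      case Nil then show ?thesis using eu by (simp add: l2_def)
    next
      case (Cons r rest)
      have "bump r y = (r @ [y], None)" using a Cons by (intro bump_max) auto
      then show ?thesis using eu Cons by (simp add: l2_def)
    qed
    show ?thesis using pv pu True MnT yM by (simp add: l2_def beta_def)
  next
    case False
    then obtain z where z: "z \<in> set (row1 T)" "\<not> z < y" using u by (auto simp: alpha_def T_def)
    have "z \<in> set ys" using z row1_sub[of T] entT by auto
    then have "y < z" using z yns by (cases "y = z") auto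
    then obtain r' z' where b: "bump (row1 T) y = (r', Some z')" using bump_some_ex z by blast
    obtain r rest where T: "T = r # rest" using z by (cases T) auto
    have pv: "Ptab (ys @ [M, y]) = (r' @ [M]) # rs_insert rest z'"
      using ev bump_app_some[OF b, of "[M]"] T by simp
    have pu: "Ptab u = r' # rs_insert rest z'" using eu b T by simp
    show ?thesis using pv pu False by (simp add: l2_def beta_def)
  qed
  then show "l2 (Ptab (butlast u @ [M, last u])) = l2 (Ptab u) + (if alpha u then 1 else 0)"
    "beta M (butlast u @ [M, last u]) = (\<not> alpha u)" by (simp_all add: ys_def y_def)
qed

lemma length_row1_map: "length (row1 (map (map f) T)) = length (row1 T)"
  by (cases T) auto

lemma transB: assumes d: "distinct u" and su: "set u = {1..m}" and m: "1 \<le> m"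
    and f: "f = (\<lambda>x. if m \<le> x then Suc x else x)"
  shows "l2 (Ptab (map f u @ [m])) = l2 (Ptab u) + (if beta m u then 1 else 0)"
    "alpha (map f u @ [m]) = (\<not> beta m u)"
    "\<not> beta (Suc m) (map f u @ [m])"
proof -
  have sm: "strict_mono f" unfolding f by (auto simp: strict_mono_def)
  define T where "T = Ptab u"
  have "u \<noteq> []" using su m by auto
  then have "T \<noteq> []" using Ptab_ne T_def by simp
  then obtain r rest where T: "T = r # rest" by (cases T) auto
  have dT: "distinct (concat T)" using d T_def Ptab_distinct by simp
  have eT: "set (concat T) = {1..m}" using su T_def Ptab_set by simp
  have pm: "Ptab (map f u) = map (map f) T" using Ptab_mono[OF sm] T_def by simp
  have pv: "Ptab (map f u @ [m]) = rs_insert (map (map f) T) m" using pm Ptab_snoc by simp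
  have fid: "\<And>z. z < m \<Longrightarrow> f z = z" using f by simp
  have bb: "butlast (map f u @ [m]) = map f u" by simp
  have conj: "l2 (Ptab (map f u @ [m])) = l2 (Ptab u) + (if beta m u then 1 else 0) \<and>
    alpha (map f u @ [m]) = (\<not> beta m u) \<and> \<not> beta (Suc m) (map f u @ [m])"
  proof (cases "beta m u")
    case True
    then have "m \<in> set r" using T T_def by (simp add: beta_def)
    then obtain r1 r2 where r: "r = r1 @ m # r2" by (meson split_list)
    have dr: "distinct r" "m \<notin> set (concat rest)" using dT T \<open>m \<in> set r\<close> by auto
    have sr: "set r \<subseteq> {1..m}" using eT T by auto
    have mr12: "m \<notin> set r1" "m \<notin> set r2" using dr(1) r by auto
    have r1lt: "\<forall>z\<in>set r1. z < m"
    proof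
      fix z assume z: "z \<in> set r1"
      then have "z \<in> {1..m}" "z \<noteq> m" using sr r mr12 by auto
      then show "z < m" by simp
    qed
    have r2lt: "\<forall>z\<in>set r2. z < m"
    proof
      fix z assume z: "z \<in> set r2"
      then have "z \<in> {1..m}" "z \<noteq> m" using sr r mr12 by auto
      then show "z < m" by simp
    qed
    have mr1: "map f r1 = r1" using r1lt fid by (intro map_idI) auto
    have mr2: "map f r2 = r2" using r2lt fid by (intro map_idI) auto
    have fm: "f m = Suc m" using f by simp
    have mr: "map f r = r1 @ Suc m # r2" using r mr1 mr2 fm by simp
    have b: "bump (map f r) m = (r1 @ m # r2, Some (Suc m))"
      unfolding mr using r1lt by (intro bump_app_none) auto
    have restlt: "\<forall>z\<in>set (concat rest). z < m"
    proof
      fix z assume z: "z \<in> set (concat rest)"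
      then have "z \<in> {1..m}" "z \<noteq> m" using eT T dr(2) by auto
      then show "z < m" by simp
    qed
    have mrest: "map (map f) rest = rest"
    proof (rule map_idI)
      fix R assume "R \<in> set rest"
      then have "\<forall>z\<in>set R. z < m" using restlt by auto
      then show "map f R = R" using fid by (intro map_idI) auto
    qed
    have "\<forall>z\<in>set (concat rest). z < Suc m" using restlt less_SucI by blast
    then have ir: "rs_insert rest (Suc m) = (row1 rest @ [Suc m]) # tl rest" by (rule ins_max)
    have P: "Ptab (map f u @ [m]) = (r1 @ m # r2) # (row1 rest @ [Suc m]) # tl rest"
      using pv T b mrest ir by simp
    have a: "\<not> alpha (map f u @ [m])" unfolding alpha_def bb pm T using mr by auto
    have nb: "\<not> beta (Suc m) (map f u @ [m])" unfolding beta_def P using r1lt r2lt by auto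
    show ?thesis using P a nb True T T_def by (simp add: l2_def)
  next
    case False
    then have mr: "m \<notin> set r" using T T_def by (simp add: beta_def)
    have rlt: "\<forall>z\<in>set r. z < m"
    proof
      fix z assume z: "z \<in> set r"
      then have "z \<in> {1..m}" "z \<noteq> m" using eT T mr by auto
      then show "z < m" by simp
    qed
    have mfr: "map f r = r" using rlt fid by (intro map_idI) auto
    have b: "bump r m = (r @ [m], None)" using rlt by (intro bump_max) auto
    have P: "Ptab (map f u @ [m]) = (r @ [m]) # map (map f) rest" using pv T mfr b by simp
    have a: "alpha (map f u @ [m])" unfolding alpha_def bb pm T using mfr rlt by simp
    have nb: "\<not> beta (Suc m) (map f u @ [m])" unfolding beta_def P using rlt by auto
    show ?thesis using P a nb False T T_def by (simp add: l2_def length_row1_map)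
  qed
  then show "l2 (Ptab (map f u @ [m])) = l2 (Ptab u) + (if beta m u then 1 else 0)"
    "alpha (map f u @ [m]) = (\<not> beta m u)"
    "\<not> beta (Suc m) (map f u @ [m])" by auto
qed

fun step :: "nat \<times> bool \<times> bool \<Rightarrow> bool \<times> bool \<Rightarrow> nat \<times> bool \<times> bool" where
  "step (c, a, b) (p, u) = (if \<not> p then (c, True, True)
      else if u then (c + (if a then 1 else 0), False, \<not> a)
      else (c + (if b then 1 else 0), \<not> b, False))"

definition auto :: "nat list \<Rightarrow> nat \<Rightarrow> nat \<times> bool \<times> bool" where
  "auto w k = foldl step (0, True, True) (map (\<lambda>j. (j \<in> set w, up w j)) [1..<k])"

lemma auto_1: "auto w (Suc 0) = (0, True, True)" by (simp add: auto_def)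
lemma auto_Suc: "1 \<le> k \<Longrightarrow> auto w (Suc k) = step (auto w k) (k \<in> set w, up w k)"
  by (simp add: auto_def)

definition ol :: "nat list \<Rightarrow> nat \<Rightarrow> nat list" where
  "ol w k = map (word_perm (filter (\<lambda>j. j < k) w)) [1..<Suc k]"

lemma st_other: "j \<noteq> k \<Longrightarrow> j \<noteq> Suc k \<Longrightarrow> simple_transp k j = j"
  by (simp add: simple_transp_def)

lemma ol_props: assumes "0 \<notin> set w" "1 \<le> k"
  shows "distinct (ol w k)" "set (ol w k) = {1..k}" "ol w k \<noteq> []"
    "word_perm (filter (\<lambda>j. j < k) w) (Suc k) = Suc k"
proof -
  let ?Q = "word_perm (filter (\<lambda>j. j < k) w)"
  have "set (filter (\<lambda>j. j < k) w) \<subseteq> {1..<k}"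
  proof
    fix x assume "x \<in> set (filter (\<lambda>j. j < k) w)"
    then have "x \<in> set w" "x < k" by auto
    then have "x \<noteq> 0" "x < k" using assms(1) by (metis, simp)
    then show "x \<in> {1..<k}" by simp
  qed
  then have p: "?Q permutes {1..k}" by (rule wp_permutes)
  show "distinct (ol w k)" unfolding ol_def distinct_map using p
    by (auto intro: inj_on_subset[OF permutes_inj_on])
  show "set (ol w k) = {1..k}" unfolding ol_def set_map set_upt atLeastLessThanSuc_atLeastAtMost using permutes_image[OF p] .
  show "ol w k \<noteq> []" using assms by (simp add: ol_def)
  show "?Q (Suc k) = Suc k" using p by (simp add: permutes_not_in)
qed

lemma upt_split2: "1 \<le> k \<Longrightarrow> [1..<Suc (Suc k)] = [1..<k] @ [k, Suc k]"
  by simp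

lemma main_rs: assumes d: "distinct w" and w0: "0 \<notin> set w" and k: "1 \<le> k"
  shows "auto w k = (l2 (Ptab (ol w k)), alpha (ol w k), beta k (ol w k))"
  using k
proof (induction k rule: nat_induct_at_least)
  case base
  have "\<forall>x\<in>set w. \<not> x < 1" using w0 less_one by metis
  then have "filter (\<lambda>j. j < 1) w = []" by (simp only: filter_empty_conv)
  then have "ol w 1 = [1]" by (simp add: ol_def)
  then show ?case by (simp add: auto_1 l2_def alpha_def beta_def Ptab_def)
next
  case (Suc k)
  let ?Q = "word_perm (filter (\<lambda>j. j < k) w)"
  let ?u = "ol w k"
  have u1: "?u = map ?Q [1..<k] @ [?Q k]" using Suc.hyps by (simp add: ol_def)
  have olS: "ol w (Suc k) = map (word_perm (filter (\<lambda>j. j < Suc k) w)) ([1..<k] @ [k, Suc k])"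
    unfolding ol_def using upt_split2[OF Suc.hyps] by simp
  have QS: "?Q (Suc k) = Suc k" using ol_props[OF w0 Suc.hyps] by simp
  have du: "distinct ?u" and su: "set ?u = {1..k}" and ne: "?u \<noteq> []" using ol_props[OF w0 Suc.hyps] by auto
  have lt: "\<forall>z\<in>set ?u. z < Suc k" using su by auto
  have IH: "auto w k = (l2 (Ptab ?u), alpha ?u, beta k ?u)" by (rule Suc.IH)
  have aS: "auto w (Suc k) = step (auto w k) (k \<in> set w, up w k)" using Suc.hyps by (rule auto_Suc)
  show ?case
  proof (cases "k \<in> set w")
    case False
    have "ol w (Suc k) = ?u @ [Suc k]" using olS Qstep[OF d, of k] False u1 QS by simp
    then show ?thesis using trans0[OF lt] aS IH False by simp
  next
    case True
    note T = True
    show ?thesis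
    proof (cases "up w k")
      case True
      have "ol w (Suc k) = map (?Q \<circ> simple_transp k) ([1..<k] @ [k, Suc k])"
        using olS Qstep[OF d, of k] T True by simp
      also have "\<dots> = map ?Q [1..<k] @ [Suc k, ?Q k]"
        using QS by (auto simp: simple_transp_def)
      also have "\<dots> = butlast ?u @ [Suc k, last ?u]" using u1 by simp
      finally have e: "ol w (Suc k) = butlast ?u @ [Suc k, last ?u]" .
      show ?thesis unfolding e using transA[OF du ne lt] aS IH T True by simp
    next
      case False
      define f where "f = (\<lambda>x::nat. if k \<le> x then Suc x else x)"
      have "ol w (Suc k) = map (simple_transp k \<circ> ?Q) ([1..<Suc k] @ [Suc k])"
        using olS Qstep[OF d, of k] T False Suc.hyps by simp
      also have "\<dots> = map (simple_transp k) ?u @ [k]" using QS by (simp add: ol_def simple_transp_def)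
      also have "map (simple_transp k) ?u = map f ?u"
        using su by (intro map_cong) (auto simp: f_def simple_transp_def)
      finally have e: "ol w (Suc k) = map f ?u @ [k]" .
      show ?thesis unfolding e using transB[OF du su Suc.hyps f_def] aS IH T False by simp
    qed
  qed
qed

lemma lambda_l2: "lambda_row n v 2 = l2 (P_tableau n v)"
  unfolding lambda_row_def rs_shape_def l2_def
  by (cases "P_tableau n v" rule: remdups_adj.cases) auto

lemma lambda_auto: assumes "distinct w" "set w \<subseteq> {1..<n}" "word_perm w = v"
  shows "lambda_row n v 2 = fst (auto w n)"
proof (cases "n = 0")
  case True
  then show ?thesis using assms by (simp add: lambda_l2 P_tableau_def auto_def l2_def)
next
  case False
  have w0: "0 \<notin> set w" using assms by auto
  have "filter (\<lambda>j. j < n) w = w" using assms by (auto simp: filter_id_conv)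
  then have "ol w n = map v [1..<Suc n]" using assms by (simp add: ol_def)
  then have "P_tableau n v = Ptab (ol w n)" by (simp add: P_tableau_def Ptab_def)
  then show ?thesis using main_rs[OF assms(1) w0, of n] False by (simp add: lambda_l2)
qed

definition autoS :: "nat set \<Rightarrow> (nat \<Rightarrow> bool) \<Rightarrow> nat \<Rightarrow> nat \<times> bool \<times> bool" where
  "autoS S U k = foldl step (0, True, True) (map (\<lambda>j. (j \<in> S, U j)) [1..<k])"

lemma auto_autoS: "auto w k = autoS (set w) (up w) k"
  by (simp add: auto_def autoS_def)

lemma autoS_Suc: "1 \<le> k \<Longrightarrow> autoS S U (Suc k) = step (autoS S U k) (k \<in> S, U k)"
  by (simp add: autoS_def)

lemma lower_gen:
  assumes fin: "finite S" and S0: "0 \<notin> S"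
    and U: "\<And>j. U j \<Longrightarrow> j \<in> S \<and> j - 1 \<in> S"
    and L: "\<And>j. j \<in> L \<Longrightarrow> j \<in> S \<and> j - 1 \<in> S"
    and V: "\<And>j. j \<in> L \<Longrightarrow> Suc j \<in> L \<Longrightarrow> U j = U (Suc j)"
    and K: "1 \<le> K"
  shows "case autoS S U K of (c, a, b) \<Rightarrow>
      c + card {j\<in>L. j < K} \<le> card {j\<in>S. j < K} \<and>
      ((a \<and> b) = (K - 1 \<notin> S)) \<and>
      (a \<noteq> b \<and> K - 1 \<notin> L \<longrightarrow> c + card {j\<in>L. j < K} < card {j\<in>S. j < K}) \<and>
      (\<not> a \<and> b \<longrightarrow> U (K - 1)) \<and> (a \<and> \<not> b \<longrightarrow> \<not> U (K - 1))"
  using K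
proof (induction K rule: nat_induct_at_least)
  case base
  have "{j\<in>L. j < 1} = {}" "{j\<in>S. j < 1} = {}" using L S0 by fastforce+
  then have c0: "card {j\<in>L. j < 1} = 0" "card {j\<in>S. j < 1} = 0" by (simp_all only: card.empty)
  have a1: "autoS S U 1 = (0, True, True)" by (simp add: autoS_def)
  show ?case unfolding a1 prod.case c0 using S0 by simp
next
  case (Suc K)
  obtain c a b where ab: "autoS S U K = (c, a, b)" by (metis prod_cases3)
  have IH: "c + card {j\<in>L. j < K} \<le> card {j\<in>S. j < K}"
    "(a \<and> b) = (K - 1 \<notin> S)"
    "a \<noteq> b \<and> K - 1 \<notin> L \<longrightarrow> c + card {j\<in>L. j < K} < card {j\<in>S. j < K}"
    "\<not> a \<and> b \<longrightarrow> U (K - 1)" "a \<and> \<not> b \<longrightarrow> \<not> U (K - 1)"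
    using Suc.IH ab by auto
  have finL: "finite L" using L fin by (meson finite_subset subsetI)
  have cS: "card {j\<in>S. j < Suc K} = card {j\<in>S. j < K} + (if K \<in> S then 1 else 0)"
  proof -
    have "{j\<in>S. j < Suc K} = (if K \<in> S then insert K {j\<in>S. j < K} else {j\<in>S. j < K})"
      by (auto simp: less_Suc_eq)
    then show ?thesis using fin by simp
  qed
  have cL: "card {j\<in>L. j < Suc K} = card {j\<in>L. j < K} + (if K \<in> L then 1 else 0)"
  proof -
    have "{j\<in>L. j < Suc K} = (if K \<in> L then insert K {j\<in>L. j < K} else {j\<in>L. j < K})"
      by (auto simp: less_Suc_eq)
    then show ?thesis using finL by simp
  qed
  have LK: "K \<in> L \<Longrightarrow> K \<in> S \<and> K - 1 \<in> S" using L by blast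
  have VK: "K \<in> L \<Longrightarrow> K - 1 \<in> L \<Longrightarrow> U (K - 1) = U K"
    using V[of "K - 1"] Suc.hyps by simp
  have UK: "U K \<Longrightarrow> K - 1 \<in> S" using U by blast
  have st: "autoS S U (Suc K) = step (c, a, b) (K \<in> S, U K)" using autoS_Suc[OF Suc.hyps] ab by simp
  show ?case unfolding st using IH cS cL LK VK UK
    by (cases "K \<in> S"; cases "U K"; cases a; cases b; cases "K \<in> L"; cases "K - 1 \<in> L"; simp)
qed

definition lk :: "nat set \<Rightarrow> nat set" where
  "lk X = {j. 2 \<le> j \<and> j - 1 \<in> X \<and> j \<in> X}"

lemma run_set: assumes "is_run R" shows "\<exists>a b. set R = {a..a+b} \<and> length R = Suc b"
proof -
  obtain a b where R: "R = [a..<a+b+1] \<or> R = rev [a..<a+b+1]" using assms unfolding is_run_def by blast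
  have s: "set [a..<a+b+1] = {a..a+b}" by (simp only: set_upt atLeastLessThanSuc_atLeastAtMost Suc_eq_plus1[symmetric] add_Suc_right)
  have l: "length [a..<a+b+1] = Suc b" by simp
  have "set R = {a..a+b} \<and> length R = Suc b" using R s l by (cases "R = [a..<a+b+1]") simp_all
  then show ?thesis by blast
qed

lemma lk_interval: "1 \<le> a \<Longrightarrow> lk {a..a+b} = {Suc a..a+b}"
  unfolding lk_def by auto

lemma runs_card:
  assumes "\<forall>R\<in>set rs. is_run R" "distinct (concat rs)" "0 \<notin> set (concat rs)"
  shows "length rs + card (\<Union>R\<in>set rs. lk (set R)) = card (set (concat rs))"
  using assms
proof (induction rs)
  case Nil then show ?case by simp
next
  case (Cons R rs)
  obtain a b where ab: "set R = {a..a+b}" "length R = Suc b" using run_set Cons.prems by force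
  have a1: "1 \<le> a" using Cons.prems ab by (cases a) auto
  have cR: "card (lk (set R)) = b" using ab a1 lk_interval by simp
  have disj: "set R \<inter> set (concat rs) = {}" using Cons.prems by auto
  have sub1: "lk (set R) \<subseteq> set R" by (auto simp: lk_def)
  have sub2: "(\<Union>R\<in>set rs. lk (set R)) \<subseteq> set (concat rs)" by (auto simp: lk_def)
  have fin2: "finite (\<Union>R\<in>set rs. lk (set R))" using sub2 finite_subset by blast
  have "card (\<Union>R'\<in>set (R # rs). lk (set R')) = card (lk (set R)) + card (\<Union>R\<in>set rs. lk (set R))"
  proof -
    have "finite (lk (set R))" using sub1 finite_subset by blast
    moreover have "lk (set R) \<inter> (\<Union>R\<in>set rs. lk (set R)) = {}" using disj sub1 sub2 by blast
    ultimately show ?thesis using fin2 by (simp add: card_Un_disjoint)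
  qed
  moreover have "card (set (concat (R # rs))) = card (set R) + card (set (concat rs))"
    using disj by (simp add: card_Un_disjoint)
  moreover have "card (set R) = Suc b" using ab by simp
  ultimately show ?case using Cons cR by simp
qed

lemma up_mid: assumes "distinct (A @ R @ B)" "j \<in> set R" "j - 1 \<in> set R"
  shows "up (A @ R @ B) j = up R j"
proof -
  obtain R1 R2 where R: "R = R1 @ j # R2" using assms by (meson split_list)
  have d1: "distinct ((A @ R1) @ j # (R2 @ B))" using assms R by simp
  have "distinct R" using assms(1) by simp
  then have d2: "distinct (R1 @ j # R2)" using R by simp
  have "up (A @ R @ B) j = (j - 1 \<in> set (A @ R1))"
    using up_split[OF d1] R by simp
  moreover have "up R j = (j - 1 \<in> set R1)" using up_split[OF d2] R by simp
  moreover have "j - 1 \<notin> set A" using assms by auto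
  ultimately show ?thesis by simp
qed

lemma up_inc: "a < j \<Longrightarrow> j < c \<Longrightarrow> up [a..<c] j"
proof -
  assume h: "a < j" "j < c"
  have "[a..<c] = [a..<j] @ [j..<c]" using upt_add_eq_append[of a j "c - j"] h by simp
  moreover have "[j..<c] = j # [Suc j..<c]" using h(2) by (rule upt_conv_Cons)
  ultimately have "[a..<c] = [a..<j] @ j # [Suc j..<c]" by simp
  moreover have "j - 1 \<in> set [a..<j]" using h by auto
  ultimately show ?thesis unfolding up_def by blast
qed

lemma up_dec: assumes "a < j" "j < c" shows "\<not> up (rev [a..<c]) j"
proof -
  have "[a..<c] = [a..<j] @ [j..<c]" using upt_add_eq_append[of a j "c - j"] assms by simp
  moreover have "[j..<c] = j # [Suc j..<c]" using assms(2) by (rule upt_conv_Cons)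
  ultimately have "[a..<c] = [a..<j] @ j # [Suc j..<c]" by simp
  then have e: "rev [a..<c] = rev [Suc j..<c] @ j # rev [a..<j]" by simp
  have "distinct (rev [a..<c])" by simp
  then have dd: "distinct (rev [Suc j..<c] @ j # rev [a..<j])" using e by simp
  have "j - 1 \<notin> set (rev [Suc j..<c])" by auto
  then show ?thesis using up_split[OF dd] e by simp
qed

lemma runs_valid:
  assumes runs: "\<forall>R\<in>set rs. is_run R" and d: "distinct (concat rs)"
    and jL: "j \<in> (\<Union>R\<in>set rs. lk (set R))" and jL': "Suc j \<in> (\<Union>R\<in>set rs. lk (set R))"
  shows "up (concat rs) j = up (concat rs) (Suc j)"
proof -
  obtain R where R: "R \<in> set rs" "j \<in> lk (set R)" using jL by blast
  obtain R' where R': "R' \<in> set rs" "Suc j \<in> lk (set R')" using jL' by blast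
  obtain rs1 rs2 where rs: "rs = rs1 @ R # rs2" using R by (meson split_list)
  have "j \<in> set R'" using R' by (auto simp: lk_def)
  have "R' = R"
  proof (rule ccontr)
    assume "R' \<noteq> R"
    then have "R' \<in> set rs1 \<or> R' \<in> set rs2" using R' rs by auto
    then show False using d rs \<open>j \<in> set R'\<close> R by (auto simp: lk_def)
  qed
  then have m: "j - 1 \<in> set R" "j \<in> set R" "Suc j \<in> set R" "2 \<le> j" using R R' by (auto simp: lk_def)
  have dc: "distinct (concat rs1 @ R @ concat rs2)" using d rs by simp
  have e: "concat rs = concat rs1 @ R @ concat rs2" using rs by simp
  have u1: "up (concat rs) j = up R j" using up_mid[OF dc m(2) m(1)] e by simp
  have u2: "up (concat rs) (Suc j) = up R (Suc j)" using up_mid[OF dc m(3)] m(2) e by simp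
  have "is_run R" using runs R by blast
  then obtain a b where "R = [a..<a+b+1] \<or> R = rev [a..<a+b+1]" by (auto simp: is_run_def)
  then show ?thesis
  proof
    assume Ri: "R = [a..<a+b+1]"
    then have "a < j" "Suc j < a+b+1" using m by auto
    then have "up [a..<a+b+1] j" "up [a..<a+b+1] (Suc j)" by (intro up_inc; simp)+
    then show ?thesis using u1 u2 Ri by simp
  next
    assume Ri: "R = rev [a..<a+b+1]"
    then have "a < j" "Suc j < a+b+1" using m by auto
    then have "\<not> up (rev [a..<a+b+1]) j" "\<not> up (rev [a..<a+b+1]) (Suc j)" by (intro up_dec; simp)+
    then show ?thesis using u1 u2 Ri by simp
  qed
qed

lemma lower_bound:
  assumes runs: "\<forall>R\<in>set rs. is_run R" and d: "distinct (concat rs)"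
    and s: "set (concat rs) \<subseteq> {1..<n}"
  shows "fst (auto (concat rs) n) \<le> length rs"
proof (cases "n = 0")
  case True then show ?thesis by (simp add: auto_def)
next
  case False
  let ?r = "concat rs"
  let ?L = "\<Union>R\<in>set rs. lk (set R)"
  have S0: "0 \<notin> set ?r" using s by auto
  have fin: "finite (set ?r)" by simp
  have Uf: "\<And>j. up ?r j \<Longrightarrow> j \<in> set ?r \<and> j - 1 \<in> set ?r" using up_in by blast
  have Lf: "\<And>j. j \<in> ?L \<Longrightarrow> j \<in> set ?r \<and> j - 1 \<in> set ?r" by (auto simp: lk_def)
  have Vf: "\<And>j. j \<in> ?L \<Longrightarrow> Suc j \<in> ?L \<Longrightarrow> up ?r j = up ?r (Suc j)"
    using runs_valid[OF runs d] by blast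
  have K: "1 \<le> n" using False by simp
  note g = lower_gen[of "set ?r" "up ?r" ?L n, OF fin S0 Uf Lf Vf K]
  have e1: "{j\<in>?L. j < n} = ?L" using s by (auto simp: lk_def)
  have e2: "{j\<in>set ?r. j < n} = set ?r" using s by auto
  have "fst (autoS (set ?r) (up ?r) n) + card ?L \<le> card (set ?r)"
    using g e1 e2 by (auto split: prod.splits)
  then show ?thesis using runs_card[OF runs d S0] by (simp add: auto_autoS)
qed

lemma up_keep:
  assumes "distinct r'" "filter (\<lambda>j. j < K) r' = r" "\<forall>j<K. up r j = up w j" "j < K"
  shows "up r' j = up w j"
proof -
  have "up (filter (\<lambda>j. j < K) r') j = up r' j" using assms by (intro up_filter) auto
  then show ?thesis using assms by simp
qed

lemma run_inc: "i < K \<Longrightarrow> is_run [i..<K]"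
  unfolding is_run_def by (rule exI[of _ i], rule exI[of _ "K - i - 1"]) simp
lemma run_dec: "i < K \<Longrightarrow> is_run (rev [i..<K])"
  unfolding is_run_def by (rule exI[of _ i], rule exI[of _ "K - i - 1"]) simp

definition Inv :: "nat list \<Rightarrow> nat \<Rightarrow> nat list list \<Rightarrow> bool" where
  "Inv w K rs \<longleftrightarrow> (\<forall>R\<in>set rs. is_run R) \<and> distinct (concat rs) \<and>
     set (concat rs) = {j\<in>set w. j < K} \<and> (\<forall>j<K. up (concat rs) j = up w j) \<and>
     length rs = fst (auto w K) \<and>
     (\<not> fst (snd (auto w K)) \<longrightarrow> (\<exists>A B i. i < K \<and> rs = A @ [[i..<K]] @ B)) \<and>
     (\<not> snd (snd (auto w K)) \<longrightarrow> (\<exists>A B i. i < K \<and> rs = A @ [rev [i..<K]] @ B))"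

lemma construct: assumes d: "distinct w" and w0: "0 \<notin> set w" and K: "1 \<le> K"
  shows "\<exists>rs. Inv w K rs"
  using K
proof (induction K rule: nat_induct_at_least)
  case base
  have "{j\<in>set w. j < 1} = {}" using w0 by auto
  moreover have "\<forall>j<1. \<not> up w j" using w0 up_in by fastforce
  ultimately have "Inv w 1 []" by (simp add: Inv_def auto_1 up_def)
  then show ?case by blast
next
  case (Suc K)
  obtain rs where I: "Inv w K rs" using Suc.IH by blast
  obtain c a b where ab: "auto w K = (c, a, b)" by (metis prod_cases3)
  have st: "auto w (Suc K) = step (c, a, b) (K \<in> set w, up w K)" using auto_Suc[OF Suc.hyps] ab by simp
  let ?r = "concat rs"
  have runs: "\<forall>R\<in>set rs. is_run R" and dr: "distinct ?r" and sr: "set ?r = {j\<in>set w. j < K}"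
    and ur: "\<forall>j<K. up ?r j = up w j" and lr: "length rs = c"
    and ja: "\<not> a \<longrightarrow> (\<exists>A B i. i < K \<and> rs = A @ [[i..<K]] @ B)"
    and jb: "\<not> b \<longrightarrow> (\<exists>A B i. i < K \<and> rs = A @ [rev [i..<K]] @ B)"
    using I ab by (auto simp: Inv_def)
  have allK: "\<forall>x\<in>set ?r. x < K" using sr by auto
  have Knr: "K \<notin> set ?r" using sr by auto
  have sS: "{j\<in>set w. j < Suc K} = (if K \<in> set w then insert K {j\<in>set w. j < K} else {j\<in>set w. j < K})"
    by (auto simp: less_Suc_eq)
  have upK_in: "up w K \<Longrightarrow> K - 1 \<in> set ?r" using up_in[of w K] sr Suc.hyps by auto
  show ?case
  proof (cases "K \<in> set w")
    case False
    have "Inv w (Suc K) rs"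
      unfolding Inv_def st using False runs dr sr ur lr sS up_in[of ?r K] up_in[of w K] Knr
      by (auto simp: less_Suc_eq)
    then show ?thesis by blast
  next
    case True
    note T = True
    show ?thesis
    proof (cases "up w K")
      case True
      note U = True
      show ?thesis
      proof (cases a)
        case True
        let ?rs = "rs @ [[K]]"
        have c': "concat ?rs = ?r @ K # []" by simp
        have d': "distinct (concat ?rs)" using dr Knr by simp
        have f': "filter (\<lambda>j. j < K) (concat ?rs) = ?r" using allK by (simp add: filter_True)
        have uK: "up (concat ?rs) K" using up_split[of ?r K "[]"] d' upK_in U by simp
        have j5a: "\<exists>A B i. i < Suc K \<and> ?rs = A @ [[i..<Suc K]] @ B"
          by (rule exI[of _ rs], rule exI[of _ "[]"], rule exI[of _ K]) simp
        have j5b: "\<exists>A B i. i < Suc K \<and> ?rs = A @ [rev [i..<Suc K]] @ B"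
          by (rule exI[of _ rs], rule exI[of _ "[]"], rule exI[of _ K]) simp
        have isr: "is_run [K]" using run_inc[of K "Suc K"] by simp
        have "Inv w (Suc K) ?rs"
          unfolding Inv_def st using T U True runs dr sr lr sS d' uK up_keep[OF d' f' ur] j5a j5b isr
          by (auto simp: less_Suc_eq)
        then show ?thesis by blast
      next
        case False
        then obtain A B i where rs: "i < K" "rs = A @ [[i..<K]] @ B" using ja by blast
        let ?rs = "A @ [[i..<Suc K]] @ B"
        have c': "concat ?rs = (concat A @ [i..<K]) @ K # concat B" using rs by simp
        have rr: "?r = concat A @ [i..<K] @ concat B" using rs by simp
        have d': "distinct (concat ?rs)" using dr Knr c' rr by auto
        have f': "filter (\<lambda>j. j < K) (concat ?rs) = ?r"
          using allK rr c' by (simp add: filter_True)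
        have "K - 1 \<in> set (concat A @ [i..<K])" using rs(1) by auto
        moreover have dd: "distinct ((concat A @ [i..<K]) @ K # concat B)" using d' unfolding c' .
        ultimately have uK: "up (concat ?rs) K" unfolding c' using up_split[OF dd] by blast
        have runs': "\<forall>R\<in>set ?rs. is_run R" using runs rs run_inc[of i "Suc K"] by auto
        have sr': "set (concat ?rs) = insert K (set ?r)" using c' rr by auto
        have j5: "\<exists>A' B' i'. i' < Suc K \<and> ?rs = A' @ [[i'..<Suc K]] @ B'"
          by (rule exI[of _ A], rule exI[of _ B], rule exI[of _ i]) (use rs(1) in simp)
        have "Inv w (Suc K) ?rs"
          unfolding Inv_def st using T U False runs' sr' lr sS d' uK up_keep[OF d' f' ur] rs sr j5
          by (auto simp: less_Suc_eq)
        then show ?thesis by blast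
      qed
    next
      case False
      note U = False
      show ?thesis
      proof (cases b)
        case True
        let ?rs = "[K] # rs"
        have c': "concat ?rs = [] @ K # ?r" by simp
        have d': "distinct (concat ?rs)" using dr Knr by simp
        have f': "filter (\<lambda>j. j < K) (concat ?rs) = ?r" using allK by (simp add: filter_True)
        have uK: "\<not> up (concat ?rs) K" using up_split[of "[]" K ?r] d' by simp
        have j5a: "\<exists>A B i. i < Suc K \<and> ?rs = A @ [[i..<Suc K]] @ B"
          by (rule exI[of _ "[]"], rule exI[of _ rs], rule exI[of _ K]) simp
        have j5b: "\<exists>A B i. i < Suc K \<and> ?rs = A @ [rev [i..<Suc K]] @ B"
          by (rule exI[of _ "[]"], rule exI[of _ rs], rule exI[of _ K]) simp
        have isr: "is_run [K]" using run_inc[of K "Suc K"] by simp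
        have "Inv w (Suc K) ?rs"
          unfolding Inv_def st using T U True runs dr sr lr sS d' uK up_keep[OF d' f' ur] j5a j5b isr
          by (auto simp: less_Suc_eq)
        then show ?thesis by blast
      next
        case False
        then obtain A B i where rs: "i < K" "rs = A @ [rev [i..<K]] @ B" using jb by blast
        let ?rs = "A @ [rev [i..<Suc K]] @ B"
        have c': "concat ?rs = concat A @ K # (rev [i..<K] @ concat B)" using rs by simp
        have rr: "?r = concat A @ rev [i..<K] @ concat B" using rs by simp
        have d': "distinct (concat ?rs)" using dr Knr c' rr by auto
        have f': "filter (\<lambda>j. j < K) (concat ?rs) = ?r"
          using allK rr c' by (simp add: filter_True)
        have "K - 1 \<notin> set (concat A)" using dr rr rs Suc.hyps by auto
        moreover have dd: "distinct (concat A @ K # (rev [i..<K] @ concat B))" using d' unfolding c' .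
        ultimately have uK: "\<not> up (concat ?rs) K" unfolding c' using up_split[OF dd] by blast
        have runs': "\<forall>R\<in>set ?rs. is_run R" using runs rs run_dec[of i "Suc K"] by auto
        have sr': "set (concat ?rs) = insert K (set ?r)" using c' rr by auto
        have j5: "\<exists>A' B' i'. i' < Suc K \<and> ?rs = A' @ [rev [i'..<Suc K]] @ B'"
          by (rule exI[of _ A], rule exI[of _ B], rule exI[of _ i]) (use rs(1) in simp)
        have "Inv w (Suc K) ?rs"
          unfolding Inv_def st using T U False runs' sr' lr sS d' uK up_keep[OF d' f' ur] rs sr j5
          by (auto simp: less_Suc_eq)
        then show ?thesis by blast
      qed
    qed
  qed
qed

primrec tw :: "nat \<Rightarrow> nat \<Rightarrow> nat list" where
  "tw a 0 = [a]"
| "tw a (Suc d) = Suc (a + d) # tw a d @ [Suc (a + d)]"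

lemma tw_perm: "word_perm (tw a d) = Transposition.transpose a (Suc (a + d))"
proof (induction d)
  case 0 then show ?case by (simp add: simple_transp_def)
next
  case (Suc d)
  show ?case unfolding tw.simps wp_cons wp_append Suc
    by (rule ext) (auto simp: simple_transp_def transpose_def)
qed

lemma tw_set: "set (tw a d) = {a..a+d}"
  by (induction d) auto

lemma word_exists: assumes "v permutes {1..n}" shows "\<exists>w. is_word n v w"
  using assms finite_atLeastAtMost[of 1 n]
proof (induction rule: permutes_induct)
  case id
  have "is_word n id []" by (simp add: is_word_def)
  then show ?case by blast
next
  case (swap a b p)
  then obtain w where w: "is_word n p w" by blast
  define lo where "lo = min a b"
  define hi where "hi = max a b"
  have lh: "lo < hi" using swap.hyps lo_def hi_def by auto
  have tr: "Transposition.transpose a b = Transposition.transpose lo (Suc (lo + (hi - lo - 1)))"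
  proof -
    have e: "Suc (lo + (hi - lo - 1)) = hi" using lh by simp
    have "Transposition.transpose a b = Transposition.transpose lo hi"
      unfolding lo_def hi_def by (cases "a \<le> b") (simp_all add: transpose_commute min_def max_def)
    then show ?thesis using e by simp
  qed
  have "is_word n (Transposition.transpose a b \<circ> p) (tw lo (hi - lo - 1) @ w)"
    using w swap.hyps lh unfolding is_word_def
    by (auto simp: wp_append tw_perm tr tw_set lo_def hi_def)
  then show ?case by blast
qed

lemma finite_nat: "finite {1..n::nat}" by simp

theorem theorem6p4:
  fixes n :: nat and v :: "nat \<Rightarrow> nat"
  assumes "v permutes {1..n}"
    and "boolean_perm n v"
  shows "lambda_row n v 2 = run_num n v"
proof -
  obtain w where "is_word n v w" using word_exists[OF assms(1)] by blast
  then have ek: "\<exists>k. \<exists>w. is_word n v w \<and> length w = k" by blast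
  have "\<exists>w0. is_word n v w0 \<and> length w0 = perm_length n v"
    using LeastI_ex[OF ek] unfolding perm_length_def .
  then obtain w0 where w0r: "reduced_word n v w0" by (auto simp: reduced_word_def)
  have d0: "distinct w0" using assms(2) w0r by (simp add: boolean_perm_def)
  have s0: "set w0 \<subseteq> {1..<n}" and v0: "word_perm w0 = v" and l0: "length w0 = perm_length n v"
    using w0r by (auto simp: reduced_word_def is_word_def)
  have z0: "0 \<notin> set w0" using s0 by auto
  have lam: "lambda_row n v 2 = fst (auto w0 n)" by (rule lambda_auto[OF d0 s0 v0])
  have ex: "\<exists>rs. length rs = fst (auto w0 n) \<and> (\<forall>r\<in>set rs. is_run r) \<and> reduced_word n v (concat rs)"
  proof (cases "n = 0")
    case True
    then have "w0 = []" using s0 by auto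
    then show ?thesis using w0r True by (intro exI[of _ "[]"]) (simp add: auto_def)
  next
    case False
    obtain rs where I: "Inv w0 n rs" using construct[OF d0 z0] False by fastforce
    let ?r = "concat rs"
    have runs: "\<forall>R\<in>set rs. is_run R" and dr: "distinct ?r" and sr: "set ?r = {j\<in>set w0. j < n}"
      and ur: "\<forall>j<n. up ?r j = up w0 j" and lr: "length rs = fst (auto w0 n)"
      using I by (auto simp: Inv_def)
    have sr': "set ?r = set w0" using sr s0 by auto
    have ua: "\<And>j. up ?r j = up w0 j"
    proof -
      fix j
      show "up ?r j = up w0 j"
      proof (cases "j < n")
        case True then show ?thesis using ur by simp
      next
        case False
        then have "j \<notin> set ?r" "j \<notin> set w0" using sr' s0 by auto
        then show ?thesis using up_in by blast
      qed
    qed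
    have "word_perm (filter (\<lambda>j. j < n) ?r) = word_perm (filter (\<lambda>j. j < n) w0)"
      by (rule wp_eq[OF dr d0 sr' ua])
    moreover have "filter (\<lambda>j. j < n) ?r = ?r" "filter (\<lambda>j. j < n) w0 = w0"
      using sr' s0 by (auto simp: filter_id_conv)
    ultimately have wpr: "word_perm ?r = v" using v0 by simp
    have "length ?r = length w0" using dr d0 sr' by (metis distinct_card)
    then have "reduced_word n v ?r" using wpr sr' s0 l0 by (simp add: reduced_word_def is_word_def)
    then show ?thesis using runs lr by blast
  qed
  have lb: "\<And>k. (\<exists>rs. length rs = k \<and> (\<forall>r\<in>set rs. is_run r) \<and> reduced_word n v (concat rs))
      \<Longrightarrow> fst (auto w0 n) \<le> k"
  proof -
    fix k assume "\<exists>rs. length rs = k \<and> (\<forall>r\<in>set rs. is_run r) \<and> reduced_word n v (concat rs)"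
    then obtain rs where rs: "length rs = k" "\<forall>r\<in>set rs. is_run r" "reduced_word n v (concat rs)" by blast
    have dr: "distinct (concat rs)" using assms(2) rs(3) by (simp add: boolean_perm_def)
    have sr: "set (concat rs) \<subseteq> {1..<n}" and vr: "word_perm (concat rs) = v"
      using rs(3) by (auto simp: reduced_word_def is_word_def)
    have "lambda_row n v 2 = fst (auto (concat rs) n)" by (rule lambda_auto[OF dr sr vr])
    moreover have "fst (auto (concat rs) n) \<le> length rs" by (rule lower_bound[OF rs(2) dr sr])
    ultimately show "fst (auto w0 n) \<le> k" using lam rs(1) by simp
  qed
  have "run_num n v = fst (auto w0 n)"
    unfolding run_num_def by (rule Least_equality) (use ex lb in auto)
  then show ?thesis using lam by simp
qed

end
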